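(* In the setting described in the context, for all $c>0$ and all sufficiently large $m$, $$\sum_{i=1}^m\big[1-2\mathsf{Q}(z_i(c))\big]z_i(c)\ \ge\ 0.21\,\frac{q}{m^2}\,\frac{(1+c)^2}{1+c^2}\,\Delta^2.$$
   Context: Two agents $a,b$, $m$ items, utilities $u^a_i,u^b_i\in[0,1]$, additive. For an allocation (partition $(\mathcal{A}_a,\mathcal{A}_b)$ of $[m]$), $\mathrm{Envy}_{a\to b}=\sum_{i\in\mathcal{A}_b}u^a_i-\sum_{i\in\mathcal{A}_a}u^a_i$, $\mathrm{Envy}_{b\to a}=\sum_{i\in\mathcal{A}_a}u^b_i-\sum_{i\in\mathcal{A}_b}u^b_i$, $\mathrm{Envy}=\max$ of the two, and it is assumed that $\min_{\mathcal{A}}\mathrm{Envy}(\mathcal{A})\le-\Delta$, where $\Delta=\Delta(m)$ satisfies $\Delta\ge m^{1/4}\log^2m$ and $\Delta=o(m/\log m)$. The number of queries is $q=m\lceil15\frac{m^{3/2}}{\Delta^2}\log m+\log^2m\rceil$. Define $z_i(c)=\sqrt{\frac{q}{m(1+c^2)}}(cu^a_i-u^b_i)$ and $\mathsf{Q}(z)=\frac1{\sqrt{2\pi}}\int_z^\infty e^{-x^2/2}dx$. $\log$ is natural. *)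

theory Defs
  imports "HOL-Analysis.Analysis" "HOL-Library.Landau_Symbols"
begin

text \<open>Items are indexed by {..<m}. An allocation is given by the bundle S of agent a
  (agent b receives the complement {..<m} - S).\<close>

definition envy_ab :: "nat \<Rightarrow> (nat \<Rightarrow> real) \<Rightarrow> nat set \<Rightarrow> real" where
  "envy_ab m ua S = (\<Sum>i\<in>{..<m} - S. ua i) - (\<Sum>i\<in>S. ua i)"

definition envy_ba :: "nat \<Rightarrow> (nat \<Rightarrow> real) \<Rightarrow> nat set \<Rightarrow> real" where
  "envy_ba m ub S = (\<Sum>i\<in>S. ub i) - (\<Sum>i\<in>{..<m} - S. ub i)"

definition envy :: "nat \<Rightarrow> (nat \<Rightarrow> real) \<Rightarrow> (nat \<Rightarrow> real) \<Rightarrow> nat set \<Rightarrow> real" where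
  "envy m ua ub S = max (envy_ab m ua S) (envy_ba m ub S)"

definition Qfun :: "real \<Rightarrow> real" where
  "Qfun z = (1 / sqrt (2 * pi)) * (LBINT x:{z..}. exp (- (x\<^sup>2) / 2))"

definition nqueries :: "(nat \<Rightarrow> real) \<Rightarrow> nat \<Rightarrow> real" where
  "nqueries D m = real m * real_of_int
     \<lceil>15 * real m powr (3/2) / (D m)\<^sup>2 * ln (real m) + (ln (real m))\<^sup>2\<rceil>"

definition zfun :: "(nat \<Rightarrow> real) \<Rightarrow> nat \<Rightarrow> (nat \<Rightarrow> real) \<Rightarrow> (nat \<Rightarrow> real) \<Rightarrow> real \<Rightarrow> nat \<Rightarrow> real" where
  "zfun D m ua ub c i = sqrt (nqueries D m / (real m * (1 + c\<^sup>2))) * (c * ua i - ub i)"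

end

theory Submission imports Defs "HOL-Probability.Probability" "HOL-Real_Asymp.Real_Asymp" begin

definition gP :: "real set \<Rightarrow> real" where
  "gP A = (\<integral>x. indicator A x * std_normal_density x \<partial>lborel)"

lemma gP_int: "A \<in> sets borel \<Longrightarrow> integrable lborel (\<lambda>x. indicator A x * std_normal_density x)"
  using integrable_mult_indicator[of A lborel std_normal_density] by simp

lemma Q_eq: "Qfun z = gP {z..}"
  unfolding Qfun_def gP_def set_lebesgue_integral_def std_normal_density_def
  by (simp add: integral_mult_right_zero[symmetric] ac_simps)

lemma gP_add: assumes "A \<in> sets borel" "B \<in> sets borel" "A \<inter> B = {}"
  shows "gP (A \<union> B) = gP A + gP B"
proof -
  have "\<And>x. indicator (A \<union> B) x * std_normal_density x = indicator A x * std_normal_density x + indicator B x * std_normal_density x"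
    using assms(3) by (auto simp: indicator_def)
  then show ?thesis unfolding gP_def
    using Bochner_Integration.integral_add[OF gP_int[OF assms(1)] gP_int[OF assms(2)]] by simp
qed

lemma gP_UNIV: "gP UNIV = 1"
  unfolding gP_def by simp

lemma gP_refl: "gP {..z} = gP {-z..}"
proof -
  have "gP {-z..} = \<bar>-1\<bar> *\<^sub>R (\<integral>x. indicator {-z..} (0 + -1 * x) * std_normal_density (0 + -1 * x) \<partial>lborel)"
    unfolding gP_def by (rule lborel_integral_real_affine) simp
  also have "\<dots> = gP {..z}" unfolding gP_def
    by (auto intro!: Bochner_Integration.integral_cong simp: indicator_def std_normal_density_def)
  finally show ?thesis by simp
qed

lemma dens_le: "std_normal_density x \<le> 1"
proof -
  have "exp (- x\<^sup>2 / 2) \<le> 1" by simp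
  moreover have "sqrt (2*pi) \<ge> 1" using pi_gt3 by simp
  ultimately have "exp (- x\<^sup>2 / 2) \<le> sqrt (2*pi)" by linarith
  then show ?thesis unfolding std_normal_density_def
    by (simp add: divide_le_eq)
qed

lemma dens_ge: assumes "\<bar>x\<bar> \<le> 1" shows "std_normal_density x \<ge> 1/6"
proof -
  have "x\<^sup>2 \<le> 1" using assms by (simp add: abs_square_le_1)
  then have "exp (- x\<^sup>2 / 2) \<ge> exp (-1/2)" by simp
  moreover have "exp (-1/2::real) \<ge> 1/2" using exp_ge_add_one_self[of "-1/2::real"] by simp
  ultimately have E: "exp (- x\<^sup>2 / 2) \<ge> 1/2" by linarith
  have "2 * pi \<le> (3::real)^2" using pi_less_4 by simp
  then have "sqrt (2 * pi) \<le> sqrt ((3::real)^2)" by (rule real_sqrt_le_mono)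
  then have s3: "sqrt (2 * pi) \<le> 3" by simp
  have s0: "sqrt (2 * pi) > 0" by simp
  have "1/6 \<le> exp (- x\<^sup>2 / 2) / 3" using E by simp
  also have "\<dots> \<le> exp (- x\<^sup>2 / 2) / sqrt (2 * pi)"
    by (rule divide_left_mono) (use s3 s0 in auto)
  finally show ?thesis by (simp add: std_normal_density_def)
qed

lemma gP_point: "gP {z..z} = 0"
proof -
  have "gP {z..z} \<le> (\<integral>x. indicator {z..z} x \<partial>lborel)"
    unfolding gP_def
    apply (rule integral_mono)
    using gP_int apply simp
     apply (simp)
    using dens_le by (simp add: indicator_def)
  also have "\<dots> = 0" by simp
  finally have "gP {z..z} \<le> 0" .
  moreover have "gP {z..z} \<ge> 0" unfolding gP_def by (intro integral_nonneg_AE) simp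
  ultimately show ?thesis by simp
qed

lemma gP_lower: assumes "0 \<le> t" "t \<le> 1" shows "gP {-t..<t} \<ge> t / 3"
proof -
  have "(\<integral>x. indicator {-t..<t} x * (1/6) \<partial>lborel) \<le> gP {-t..<t}"
    unfolding gP_def
    apply (rule integral_mono)
    apply (rule integrable_mult_left) apply (rule integrable_real_indicator) using assms apply (auto)[2]
    using gP_int apply simp
    apply (clarsimp simp: indicator_def)
    subgoal for x using dens_ge[of x] assms by (simp add: abs_le_iff)
    done
  moreover have "(\<integral>x. indicator {-t..<t} x * (1/6::real) \<partial>lborel) = t/3"
    using assms by simp
  ultimately show ?thesis by simp
qed

lemma gP_mono: assumes "A \<subseteq> B" "B \<in> sets borel" "A \<in> sets borel" shows "gP A \<le> gP B"
  unfolding gP_def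
  apply (rule integral_mono)
  using gP_int assms apply simp
  using gP_int assms apply simp
  using assms by (auto simp: indicator_def)

lemma one_m2Q: "1 - 2 * Qfun z = gP {-z..} - gP {z..}"
proof -
  have "1 = gP {z..} + gP {..<z}"
  proof -
    have "{z..} \<union> {..<z} = UNIV" by auto
    moreover have "{z..} \<inter> {..<z} = {}" by auto
    ultimately show ?thesis using gP_add[of "{z..}" "{..<z}"] gP_UNIV by simp
  qed
  moreover have "gP {..z} = gP {..<z} + gP {z..z}"
  proof -
    have "{..<z} \<union> {z..z} = {..z}" "{..<z} \<inter> {z..z} = {}" by auto
    then show ?thesis using gP_add[of "{..<z}" "{z..z}"] by simp
  qed
  ultimately show ?thesis using gP_point gP_refl[of z] Q_eq[of z] by simp
qed

lemma G_bound: "(1 - 2 * Qfun z) * z \<ge> \<bar>z\<bar> * min \<bar>z\<bar> 1 / 3"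
proof -
  have pos: "(1 - 2 * Qfun t) * t \<ge> t * min t 1 / 3" if "t \<ge> 0" for t
  proof -
    have "1 - 2 * Qfun t = gP {-t..<t}"
    proof -
      have "{-t..<t} \<union> {t..} = {-t..}" using that by auto
      moreover have "{-t..<t} \<inter> {t..} = {}" by auto
      ultimately show ?thesis using one_m2Q[of t] gP_add[of "{-t..<t}" "{t..}"] that by simp
    qed
    also have "\<dots> \<ge> gP {-min t 1..<min t 1}"
      by (rule gP_mono) auto
    finally have "1 - 2 * Qfun t \<ge> min t 1 / 3" using gP_lower[of "min t 1"] that by simp
    then show ?thesis using that mult_left_mono by (fastforce simp: algebra_simps)
  qed
  show ?thesis
  proof (cases "z \<ge> 0")
    case True then show ?thesis using pos[of z] by simp
  next
    case False
    have e: "1 - 2*Qfun z = -(1 - 2*Qfun(-z))" using one_m2Q[of z] one_m2Q[of "-z"] by simp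
    have "(1 - 2 * Qfun z) * z = (1 - 2 * Qfun (-z)) * (-z)" unfolding e by (simp only: mult_minus_left mult_minus_right)
    then show ?thesis using pos[of "-z"] False by simp
  qed
qed


lemma pt_bound:
  fixes a z :: real
  assumes "0 \<le> a" "a \<le> 1/2"
  shows "0.21 * (2 * a * \<bar>z\<bar> - a^2) \<le> (1 - 2 * Qfun z) * z"
proof -
  have G: "\<bar>z\<bar> * min \<bar>z\<bar> 1 / 3 \<le> (1 - 2 * Qfun z) * z" by (rule G_bound)
  have sq: "2 * a * \<bar>z\<bar> - a^2 \<le> \<bar>z\<bar>^2"
    using zero_le_power2[of "\<bar>z\<bar> - a"] by (simp add: power2_eq_square algebra_simps)
  show ?thesis
  proof (cases "\<bar>z\<bar> \<le> 1")
    case True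
    then have "\<bar>z\<bar> * min \<bar>z\<bar> 1 / 3 = \<bar>z\<bar>^2 / 3" by (simp add: power2_eq_square min_def)
    moreover have "0.21 * (2 * a * \<bar>z\<bar> - a^2) \<le> 0.21 * \<bar>z\<bar>^2" using sq by simp
    moreover have "0.21 * \<bar>z\<bar>^2 \<le> \<bar>z\<bar>^2 / 3" by simp
    ultimately show ?thesis using G by linarith
  next
    case False
    then have "\<bar>z\<bar> * min \<bar>z\<bar> 1 / 3 = \<bar>z\<bar> / 3" by (simp add: min_def)
    moreover have "0.21 * (2 * a * \<bar>z\<bar> - a^2) \<le> 0.21 * (2 * a * \<bar>z\<bar>)" using assms by simp
    moreover have "a * \<bar>z\<bar> \<le> (1/2) * \<bar>z\<bar>" using assms by (intro mult_right_mono) auto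
    then have "0.21 * (2 * a * \<bar>z\<bar>) \<le> \<bar>z\<bar> / 3" by simp
    ultimately show ?thesis using G by linarith
  qed
qed

lemma sum_abs_w:
  fixes ua ub :: "nat \<Rightarrow> real"
  assumes S: "S \<subseteq> {..<m}" and E: "envy m ua ub S \<le> - Dm" and c: "c > 0"
  shows "(1 + c) * Dm \<le> (\<Sum>i<m. \<bar>c * ua i - ub i\<bar>)"
proof -
  define R where "R = {..<m} - S"
  have fS: "finite S" using S finite_subset by blast
  have fR: "finite R" unfolding R_def by simp
  have e1: "(\<Sum>i\<in>R. ua i) - (\<Sum>i\<in>S. ua i) \<le> - Dm"
    using E unfolding envy_def envy_ab_def R_def by simp
  have e2: "(\<Sum>i\<in>S. ub i) - (\<Sum>i\<in>R. ub i) \<le> - Dm"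
    using E unfolding envy_def envy_ba_def R_def by simp
  have split: "(\<Sum>i<m. \<bar>c * ua i - ub i\<bar>) = (\<Sum>i\<in>S. \<bar>c * ua i - ub i\<bar>) + (\<Sum>i\<in>R. \<bar>c * ua i - ub i\<bar>)"
    unfolding R_def using S by (metis finite_lessThan sum.subset_diff add.commute)
  have a1: "(\<Sum>i\<in>S. c * ua i - ub i) \<le> (\<Sum>i\<in>S. \<bar>c * ua i - ub i\<bar>)" by (intro sum_mono) simp
  have a2: "- (\<Sum>i\<in>R. c * ua i - ub i) \<le> (\<Sum>i\<in>R. \<bar>c * ua i - ub i\<bar>)"
    unfolding sum_negf[symmetric] by (intro sum_mono) simp
  have "(\<Sum>i\<in>S. c * ua i - ub i) - (\<Sum>i\<in>R. c * ua i - ub i)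
      = c * ((\<Sum>i\<in>S. ua i) - (\<Sum>i\<in>R. ua i)) + ((\<Sum>i\<in>R. ub i) - (\<Sum>i\<in>S. ub i))"
    by (simp add: sum_subtractf sum_distrib_left algebra_simps)
  moreover have "c * Dm \<le> c * ((\<Sum>i\<in>S. ua i) - (\<Sum>i\<in>R. ua i))"
    using e1 c by (intro mult_left_mono) auto
  ultimately have "(1 + c) * Dm \<le> (\<Sum>i\<in>S. c * ua i - ub i) - (\<Sum>i\<in>R. c * ua i - ub i)"
    using e2 by (simp add: algebra_simps)
  then show ?thesis using a1 a2 split by linarith
qed

theorem lemma12:
  fixes D :: "nat \<Rightarrow> real" and c :: real
  assumes D_lower: "\<forall>m. D m \<ge> root 4 (real m) * (ln (real m))\<^sup>2"
    and D_small: "D \<in> o(\<lambda>m. real m / ln (real m))"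
    and c_pos: "c > 0"
  shows "\<exists>M. \<forall>m \<ge> M. \<forall>ua ub :: nat \<Rightarrow> real.
           (\<forall>i<m. 0 \<le> ua i \<and> ua i \<le> 1 \<and> 0 \<le> ub i \<and> ub i \<le> 1)
         \<and> (\<exists>S \<subseteq> {..<m}. envy m ua ub S \<le> - D m)
         \<longrightarrow> (\<Sum>i<m. (1 - 2 * Qfun (zfun D m ua ub c i)) * zfun D m ua ub c i)
             \<ge> 0.21 * (nqueries D m / (real m)\<^sup>2) * ((1 + c)\<^sup>2 / (1 + c\<^sup>2)) * (D m)\<^sup>2"
proof -
  define K where "K = (1 + c)\<^sup>2 / (1 + c\<^sup>2)"
  have K_le: "K \<le> 2"
  proof -
    have "(1 + c)\<^sup>2 \<le> 2 * (1 + c\<^sup>2)" using zero_le_power2[of "1 - c"] by (simp add: power2_eq_square algebra_simps)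
    then show ?thesis unfolding K_def by (simp add: divide_le_eq add_pos_nonneg)
  qed
  have K0: "K \<ge> 0" unfolding K_def by simp
  have L1: "(\<lambda>m::nat. 15 * real m powr (3/2) * ln (real m)) \<in> o(\<lambda>m. (real m)^2)" by real_asymp
  have E1: "eventually (\<lambda>m. 15 * real m powr (3/2) * ln (real m) \<le> 1/32 * (real m)^2) sequentially"
  proof -
    have ev: "eventually (\<lambda>x. norm (15 * real x powr (3/2) * ln (real x)) \<le> 1/32 * norm ((real x)^2)) sequentially"
      by (rule landau_o.smallD[OF L1]) simp
    show ?thesis using ev
  proof (rule eventually_mono)
    fix x :: nat
    assume h: "norm (15 * real x powr (3/2) * ln (real x)) \<le> 1/32 * norm ((real x)^2)"
    have "15 * real x powr (3/2) * ln (real x) \<le> norm (15 * real x powr (3/2) * ln (real x))"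
      by simp
    also have "\<dots> \<le> 1/32 * (real x)^2" using h by simp
    finally show "15 * real x powr (3/2) * ln (real x) \<le> 1/32 * (real x)^2" .
  qed
  qed
  have E2: "eventually (\<lambda>m. \<bar>D m\<bar> \<le> 1/8 * \<bar>real m / ln (real m)\<bar>) sequentially"
    using landau_o.smallD[OF D_small, of "1/8"] by simp
  have E3: "eventually (\<lambda>m. m \<ge> 3) sequentially" by (rule eventually_ge_at_top)
  have "eventually (\<lambda>m. 15 * real m powr (3/2) * ln (real m) \<le> 1/32 * (real m)^2
          \<and> \<bar>D m\<bar> \<le> 1/8 * \<bar>real m / ln (real m)\<bar> \<and> m \<ge> 3) sequentially"
    by (intro eventually_conj E1 E2 E3)
  then obtain M where
    M0: "\<forall>m\<ge>M. 15 * real m powr (3/2) * ln (real m) \<le> 1/32 * (real m)^2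
          \<and> \<bar>D m\<bar> \<le> 1/8 * \<bar>real m / ln (real m)\<bar> \<and> m \<ge> 3"
    unfolding eventually_sequentially by (rule exE)
  have M: "\<And>m. m \<ge> M \<Longrightarrow> 15 * real m powr (3/2) * ln (real m) \<le> 1/32 * (real m)^2
          \<and> \<bar>D m\<bar> \<le> 1/8 * \<bar>real m / ln (real m)\<bar> \<and> m \<ge> 3"
    using M0 by blast
  show ?thesis
  proof (intro exI allI impI)
    fix m ua ub
    assume mM: "M \<le> m" and H: "(\<forall>i<m. 0 \<le> ua i \<and> ua i \<le> 1 \<and> 0 \<le> ub i \<and> ub i \<le> 1)
         \<and> (\<exists>S \<subseteq> {..<m}. envy m ua ub S \<le> - D m)"
    then obtain S where S: "S \<subseteq> {..<m}" "envy m ua ub S \<le> - D m" by blast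
    have m3: "m \<ge> 3" and E1m: "15 * real m powr (3/2) * ln (real m) \<le> 1/32 * (real m)^2"
      and E2m: "\<bar>D m\<bar> \<le> 1/8 * \<bar>real m / ln (real m)\<bar>" using M[OF mM] by auto
    have mpos: "real m > 0" using m3 by simp
    have ln1: "1 \<le> ln (real m)"
    proof -
      have "exp 1 \<le> real m" using exp_le m3 by linarith
      then show ?thesis using mpos by (simp add: ln_ge_iff)
    qed
    define Dm where "Dm = D m"
    have Dpos: "Dm > 0"
    proof -
      have "root 4 (real m) > 0" using mpos by simp
      moreover have "(ln (real m))\<^sup>2 > 0" using ln1 by simp
      ultimately show ?thesis using D_lower unfolding Dm_def by (meson mult_pos_pos order_less_le_trans)
    qed
    define X where "X = 15 * real m powr (3/2) / Dm^2 * ln (real m) + (ln (real m))^2"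
    define q where "q = nqueries D m"
    have q_eq: "q = real m * of_int \<lceil>X\<rceil>" unfolding q_def nqueries_def X_def Dm_def by simp
    have X0: "X \<ge> 0" unfolding X_def using ln1 by simp
    have cX: "of_int \<lceil>X\<rceil> \<le> X + 1" "0 \<le> (of_int \<lceil>X\<rceil> :: real)"
      using X0 le_of_int_ceiling[of X] of_int_ceiling_le_add_one[of X] by linarith+
    have q0: "q \<ge> 0" using q_eq cX mpos by simp
    have qm: "q / real m = of_int \<lceil>X\<rceil>" using q_eq mpos by simp
    have pd: "0 < real m * (1 + c\<^sup>2)" using mpos by (simp add: add_pos_nonneg)
    have qd: "0 \<le> q / (real m * (1 + c\<^sup>2))" using q0 pd by (rule divide_nonneg_pos)
    define \<alpha> where "\<alpha> = sqrt (q / (real m * (1 + c\<^sup>2)))"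
    have z_eq: "\<And>i. zfun D m ua ub c i = \<alpha> * (c * ua i - ub i)"
      unfolding zfun_def \<alpha>_def q_def by simp
    define T where "T = \<alpha> * (1 + c) * Dm"
    define a where "a = T / real m"
    have \<alpha>0: "\<alpha> \<ge> 0" unfolding \<alpha>_def using qd by simp
    have T0: "T \<ge> 0" unfolding T_def using \<alpha>0 c_pos Dpos by simp
    have a0: "a \<ge> 0" unfolding a_def using T0 mpos by simp
    have \<alpha>sq: "\<alpha>^2 = q / (real m * (1 + c\<^sup>2))" unfolding \<alpha>_def using qd by simp
    have Tsq: "T^2 = q / (real m) * K * Dm^2"
    proof -
      have "T^2 = \<alpha>^2 * (1 + c)^2 * Dm^2" unfolding T_def by (simp only: power_mult_distrib)
      also have "\<dots> = q / (real m * (1 + c\<^sup>2)) * (1 + c)^2 * Dm^2" using \<alpha>sq by simp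
      also have "\<dots> = q / (real m) * K * Dm^2"
        using mpos pd by (simp add: K_def field_simps)
      finally show ?thesis .
    qed
    have asq: "a^2 = of_int \<lceil>X\<rceil> * K * Dm^2 / (real m)^2"
      unfolding a_def using Tsq qm by (simp add: power_divide)
    have key: "(X + 1) * Dm^2 \<le> (real m)^2 / 16"
    proof -
      have "(X + 1) * Dm^2 = 15 * real m powr (3/2) * ln (real m) + (Dm * ln (real m))^2 + Dm^2"
        unfolding X_def using Dpos by (simp add: field_simps power_mult_distrib)
      moreover have "Dm * ln (real m) \<le> real m / 8"
      proof -
        have "Dm \<le> 1/8 * (real m / ln (real m))" using E2m Dpos ln1 mpos unfolding Dm_def by simp
        then show ?thesis using ln1 by (simp add: field_simps)
      qed
      then have "(Dm * ln (real m))^2 \<le> (real m / 8)^2"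
        using Dpos ln1 by (intro power_mono) auto
      moreover have "Dm^2 \<le> (Dm * ln (real m))^2"
      proof -
        have "Dm \<le> Dm * ln (real m)" using Dpos ln1 by simp
        then show ?thesis using Dpos by (intro power_mono) auto
      qed
      ultimately show ?thesis using E1m by (simp add: power_divide)
    qed
    have a_small: "a \<le> 1/2"
    proof -
      have "a^2 \<le> (X + 1) * 2 * Dm^2 / (real m)^2"
        unfolding asq using cX K_le K0 mpos
        by (intro divide_right_mono mult_right_mono mult_mono) auto
      also have "\<dots> \<le> 1/8"
      proof -
        have "(X + 1) * 2 * Dm^2 = 2 * ((X + 1) * Dm^2)" by (simp add: ac_simps)
        then have "(X + 1) * 2 * Dm^2 \<le> (real m)^2 / 8" using key by linarith
        moreover have "(real m)^2 > 0" using mpos by simp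
        ultimately show ?thesis by (simp add: divide_le_eq)
      qed
      finally have "a^2 \<le> 1/8" .
      show ?thesis
      proof (rule ccontr)
        assume "\<not> a \<le> 1/2"
        then have "1/2 < a" by simp
        then have "(1/2::real)^2 < a^2" by (rule power_strict_mono) auto
        moreover have "(1/2::real)^2 = 1/4" by (simp add: power_divide)
        ultimately show False using \<open>a^2 \<le> 1/8\<close> by linarith
      qed
    qed
    have sumw: "(1 + c) * Dm \<le> (\<Sum>i<m. \<bar>c * ua i - ub i\<bar>)"
      using sum_abs_w[OF S(1) _ c_pos] S(2) unfolding Dm_def by blast
    have sumz: "T \<le> (\<Sum>i<m. \<bar>zfun D m ua ub c i\<bar>)"
    proof -
      have "(\<Sum>i<m. \<bar>zfun D m ua ub c i\<bar>) = \<alpha> * (\<Sum>i<m. \<bar>c * ua i - ub i\<bar>)"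
        unfolding z_eq using \<alpha>0 by (simp add: abs_mult sum_distrib_left)
      moreover have "\<alpha> * ((1 + c) * Dm) \<le> \<alpha> * (\<Sum>i<m. \<bar>c * ua i - ub i\<bar>)"
        by (rule mult_left_mono[OF sumw \<alpha>0])
      ultimately show ?thesis unfolding T_def by (simp add: mult.assoc)
    qed
    have "(\<Sum>i<m. 0.21 * (2 * a * \<bar>zfun D m ua ub c i\<bar> - a^2))
        \<le> (\<Sum>i<m. (1 - 2 * Qfun (zfun D m ua ub c i)) * zfun D m ua ub c i)"
      by (intro sum_mono pt_bound a0 a_small)
    moreover have "(\<Sum>i<m. 0.21 * (2 * a * \<bar>zfun D m ua ub c i\<bar> - a^2))
        = 0.21 * (2 * a * (\<Sum>i<m. \<bar>zfun D m ua ub c i\<bar>) - real m * a^2)"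
    proof -
      have "(\<Sum>i<m. 0.21 * (2 * a * \<bar>zfun D m ua ub c i\<bar> - a^2))
          = 0.21 * (\<Sum>i<m. 2 * a * \<bar>zfun D m ua ub c i\<bar> - a^2)"
        by (rule sum_distrib_left[symmetric])
      also have "(\<Sum>i<m. 2 * a * \<bar>zfun D m ua ub c i\<bar> - a^2)
          = 2 * a * (\<Sum>i<m. \<bar>zfun D m ua ub c i\<bar>) - real m * a^2"
        by (simp only: sum_subtractf sum_distrib_left[symmetric] sum_constant card_lessThan)
      finally show ?thesis .
    qed
    moreover have "0.21 * (2 * a * T - real m * a^2) \<le> 0.21 * (2 * a * (\<Sum>i<m. \<bar>zfun D m ua ub c i\<bar>) - real m * a^2)"
      using sumz a0 by (simp add: mult_left_mono)
    moreover have "0.21 * (2 * a * T - real m * a^2) = 0.21 * T^2 / real m"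
      unfolding a_def using mpos by (simp add: field_simps power2_eq_square)
    moreover have "0.21 * (nqueries D m / (real m)\<^sup>2) * ((1 + c)\<^sup>2 / (1 + c\<^sup>2)) * (D m)\<^sup>2 = 0.21 * T^2 / real m"
      unfolding Tsq K_def q_def Dm_def using mpos by (simp add: power2_eq_square field_simps)
    ultimately show "(\<Sum>i<m. (1 - 2 * Qfun (zfun D m ua ub c i)) * zfun D m ua ub c i)
             \<ge> 0.21 * (nqueries D m / (real m)\<^sup>2) * ((1 + c)\<^sup>2 / (1 + c\<^sup>2)) * (D m)\<^sup>2"
      by linarith
  qed
qed

end
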